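(* Let $\Phi:\mathcal H\to\mathrm{End}_{\mathbb K}(V^{\otimes n})$ be the representation with $\Phi(g_a)=T_a$ ($0\le a\le n-1$) and let $\Psi^{\otimes n}:U_q(\mathfrak g)\to\mathrm{End}_{\mathbb K}(V^{\otimes n})$ be the tensor-power vector representation, both as in the context. Then for all $X\in\mathcal H$ and $Y\in U_q(\mathfrak g)$, $$\Phi(X)\Psi^{\otimes n}(Y)=\Psi^{\otimes n}(Y)\Phi(X).$$
   Context: Let $m,n\ge 1$, $\mathbb K=\mathbb C(q,Q_1,\dots,Q_m)$ (indeterminates). Cyclotomic Hecke algebra $\mathcal H$: the unital $\mathbb K$-algebra generated by $g_0,\dots,g_{n-1}$ with relations $(g_0-Q_1)\cdots(g_0-Q_m)=0$, $g_0g_1g_0g_1=g_1g_0g_1g_0$, $g_i^2=(q-q^{-1})g_i+1$ ($1\le i\le n-1$), $g_ig_j=g_jg_i$ ($|i-j|\ge2$), $g_ig_{i+1}g_i=g_{i+1}g_ig_{i+1}$ ($1\le i\le n-2$). Superspace and Hecke action: fix nonnegative integers $k_1,\dots,k_m,\ell_1,\dots,\ell_m$, $N=\sum_c(k_c+\ell_c)>0$, $d_c=\sum_{j\le c}(k_j+\ell_j)$. $V$ is a $\mathbb K$-superspace with homogeneous basis $\{v^{(c)}_a:1\le c\le m,1\le a\le k_c+\ell_c\}$, $v^{(c)}_a$ even iff $a\le k_c$, of colour $c$; ordered by $v^{(c)}_a<v^{(c')}_b$ iff $c<c'$ or ($c=c'$, $a<b$), and written $u_1<\cdots<u_N$ (so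 colour $c$ occupies positions $d_{c-1}+1,\dots,d_c$, $d_0=0$). $\bar j$ is the parity of $u_j$, $\mathrm{col}(j)$ its colour. For $\mathbf i=(i_1,\dots,i_n)\in\{1,\dots,N\}^n$, $\mathbf i$ also denotes $u_{i_1}\otimes\cdots\otimes u_{i_n}$, $c_t(\mathbf i)=\mathrm{col}(i_t)$, and $\mathbf i s_a$ is $\mathbf i$ with entries $a,a+1$ swapped. Operators: $s_a(\mathbf i)=(-1)^{\bar i_a}\mathbf i$ if $i_a=i_{a+1}$, else $(-1)^{\bar i_a\bar i_{a+1}}\mathbf i s_a$; $T_a(\mathbf i)=(q-q^{-1})\mathbf i+(-1)^{\bar i_a\bar i_{a+1}}\mathbf i s_a$ if $i_a<i_{a+1}$, $=\frac{(q-q^{-1})+(-1)^{\bar i_a}(q+q^{-1})}{2}\mathbf i$ if $i_a=i_{a+1}$, $=(-1)^{\bar i_a\bar i_{a+1}}\mathbf i s_a$ if $i_a>i_{a+1}$; $S_a(\mathbf i)=T_a(\mathbf i)$ if $c_a(\mathbf i)=c_{a+1}(\mathbf i)$, else $s_a(\mathbf i)$; $S_0(\mathbf i)=Q_{c_1(\mathbf i)}\mathbf i$; $\theta=S_{n-1}\cdots S_1$; $T_0=T_1^{-1}\cdots T_{n-1}^{-1}\theta S_0$. The assignment $g_a\mapsto T_a$ extends to a representation $\Phi$ of $\mathcal H$. Quantum superalgebra action: $\mathfrak g=\mathfrak{gl}(k_1|\ell_1)\oplus\cdots\oplus\mathfrak{gl}(k_m|\ell_m)\subseteq\mathfrak{gl}(k|\ell)$,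 $k=\sum k_c$, $\ell=\sum\ell_c$, and $U_q(\mathfrak g)$ is its quantized enveloping superalgebra, viewed as the subalgebra of the quantum general linear superalgebra (with respect to the ordered homogeneous basis $u_1,\dots,u_N$) generated by $K_b^{\pm1}$ ($1\le b\le N$) and $E_a,F_a$ for $a\in\{1,\dots,N-1\}\setminus\{d_1,\dots,d_{m-1}\}$; $E_a,F_a$ have parity $\bar a+\overline{a+1}$, $K_b$ are even. Vector representation $\Psi$ on $V$: $E_au_{a+1}=(-1)^{\overline{a+1}}u_a$, $E_au_j=0$ ($j\ne a+1$); $F_au_a=(-1)^{\bar a}u_{a+1}$, $F_au_j=0$ ($j\neq a$); $K_b^{\pm1}u_j=q^{\pm(-1)^{\bar j}\delta_{bj}}u_j$. With $\widetilde K_a=K_aK_{a+1}^{-1}$, the representation $\Psi^{\otimes n}$ on $V^{\otimes n}$ (from the coproduct $\Delta(K_b)=K_b\otimes K_b$, $\Delta(E_a)=E_a\otimes\widetilde K_a+1\otimes E_a$, $\Delta(F_a)=F_a\otimes1+\widetilde K_a^{-1}\otimes F_a$) is given by $\Psi^{\otimes n}(E_a)=\sum_{p=0}^{n-1}\widetilde K_a^{\otimes p}\otimes\Psi(E_a)\otimes\mathrm{Id}^{\otimes(n-1-p)}$, $\Psi^{\otimes n}(F_a)=\sum_{p=0}^{n-1}\mathrm{Id}^{\otimes p}\otimes\Psi(F_a)\otimes(\widetilde K_a^{-1})^{\otimes(n-1-p)}$, $\Psi^{\otimes n}(K_b)=K_b^{\otimes n}$, where tensor products of homogeneous operators act with the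 Koszul sign $(\phi\otimes\psi)(x\otimes y)=(-1)^{\bar x\bar\psi}\phi(x)\otimes\psi(y)$. *)

theory Defs
  imports Complex_Main "HOL-Library.Poly_Mapping" "HOL-Computational_Algebra.Fraction_Field"
begin

section \<open>The ground field K = C(q, Q_1, Q_2, ...)\<close>

type_synonym cpoly = "(nat \<Rightarrow>\<^sub>0 nat) \<Rightarrow>\<^sub>0 complex"
type_synonym KK = "cpoly fract"

definition var :: "nat \<Rightarrow> KK" where
  "var v = Fract (Poly_Mapping.single (Poly_Mapping.single v 1) 1) 1"

definition qK :: KK where "qK = var 0"
definition QK :: "nat \<Rightarrow> KK" where "QK c = var c"

definition dd :: "(nat \<Rightarrow> nat) \<Rightarrow> (nat \<Rightarrow> nat) \<Rightarrow> nat \<Rightarrow> nat" where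
  "dd kk ll c = (\<Sum>j=1..c. kk j + ll j)"

definition col :: "(nat \<Rightarrow> nat) \<Rightarrow> (nat \<Rightarrow> nat) \<Rightarrow> nat \<Rightarrow> nat" where
  "col kk ll j = (LEAST c. j \<le> dd kk ll c)"

definition par :: "(nat \<Rightarrow> nat) \<Rightarrow> (nat \<Rightarrow> nat) \<Rightarrow> nat \<Rightarrow> nat" where
  "par kk ll j = (let c = col kk ll j in if j - dd kk ll (c - 1) \<le> kk c then 0 else 1)"

text \<open>Basis tuples of V^{\<otimes>n}: lists i = (i_1,...,i_n) (0-indexed as Isabelle lists).\<close>
definition Bas :: "nat \<Rightarrow> nat \<Rightarrow> nat list set" where
  "Bas n N = {i. length i = n \<and> set i \<subseteq> {1..N}}"

text \<open>M r c = coefficient of basis vector r in M(basis vector c).\<close>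
type_synonym 'k tmat = "nat list \<Rightarrow> nat list \<Rightarrow> 'k"

definition mmul :: "nat list set \<Rightarrow> 'k::field tmat \<Rightarrow> 'k tmat \<Rightarrow> 'k tmat" where
  "mmul B M M' = (\<lambda>r c. \<Sum>s\<in>B. M r s * M' s c)"

definition idm :: "'k::field tmat" where
  "idm = (\<lambda>r c. if r = c then 1 else 0)"

definition mprod :: "nat list set \<Rightarrow> 'k::field tmat list \<Rightarrow> 'k tmat" where
  "mprod B Ms = foldr (mmul B) Ms idm"

definition from_img :: "(nat list \<Rightarrow> nat list \<Rightarrow> 'k) \<Rightarrow> 'k tmat" where
  "from_img f = (\<lambda>r c. f c r)"

definition unitv :: "nat list \<Rightarrow> nat list \<Rightarrow> 'k::field" where
  "unitv v = (\<lambda>r. if r = v then 1 else 0)"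

inductive_set galg :: "nat list set \<Rightarrow> 'k::field tmat set \<Rightarrow> 'k tmat set" for B G where
  galg_id: "idm \<in> galg B G"
| galg_gen: "M \<in> G \<Longrightarrow> M \<in> galg B G"
| galg_add: "M \<in> galg B G \<Longrightarrow> M' \<in> galg B G \<Longrightarrow> (\<lambda>r c. M r c + M' r c) \<in> galg B G"
| galg_smult: "M \<in> galg B G \<Longrightarrow> (\<lambda>r c. x * M r c) \<in> galg B G"
| galg_mult: "M \<in> galg B G \<Longrightarrow> M' \<in> galg B G \<Longrightarrow> mmul B M M' \<in> galg B G"

text \<open>i s_a: swap entries at positions a, a+1 (1-indexed)\<close>
definition swp :: "nat \<Rightarrow> nat list \<Rightarrow> nat list" where
  "swp a i = i[a - 1 := i ! a, a := i ! (a - 1)]"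

definition Tact :: "'k::field \<Rightarrow> (nat \<Rightarrow> nat) \<Rightarrow> nat \<Rightarrow> nat list \<Rightarrow> nat list \<Rightarrow> 'k" where
  "Tact q p a i = (let x = i ! (a - 1); y = i ! a; sg = (-1) ^ (p x * p y) in
     if x < y then (\<lambda>r. (q - inverse q) * unitv i r + sg * unitv (swp a i) r)
     else if x = y then (\<lambda>r. ((q - inverse q) + (-1) ^ p x * (q + inverse q)) / 2 * unitv i r)
     else (\<lambda>r. sg * unitv (swp a i) r))"

definition sact :: "(nat \<Rightarrow> nat) \<Rightarrow> nat \<Rightarrow> nat list \<Rightarrow> nat list \<Rightarrow> 'k::field" where
  "sact p a i = (let x = i ! (a - 1); y = i ! a in
     if x = y then (\<lambda>r. (-1) ^ p x * unitv i r)
     else (\<lambda>r. (-1) ^ (p x * p y) * unitv (swp a i) r))"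

definition Tm :: "(nat \<Rightarrow> nat) \<Rightarrow> (nat \<Rightarrow> nat) \<Rightarrow> nat \<Rightarrow> KK tmat" where
  "Tm kk ll a = from_img (Tact qK (par kk ll) a)"

definition Sm :: "(nat \<Rightarrow> nat) \<Rightarrow> (nat \<Rightarrow> nat) \<Rightarrow> nat \<Rightarrow> KK tmat" where
  "Sm kk ll a = from_img (\<lambda>i. if col kk ll (i ! (a - 1)) = col kk ll (i ! a)
                                then Tact qK (par kk ll) a i else sact (par kk ll) a i)"

definition S0m :: "(nat \<Rightarrow> nat) \<Rightarrow> (nat \<Rightarrow> nat) \<Rightarrow> KK tmat" where
  "S0m kk ll = from_img (\<lambda>i r. QK (col kk ll (i ! 0)) * unitv i r)"

text \<open>T_a^{-1} = T_a - (q - q^{-1}) Id, the inverse forced by the quadratic relation.\<close>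
definition Tinvm :: "(nat \<Rightarrow> nat) \<Rightarrow> (nat \<Rightarrow> nat) \<Rightarrow> nat \<Rightarrow> KK tmat" where
  "Tinvm kk ll a = (\<lambda>r c. Tm kk ll a r c - (qK - inverse qK) * idm r c)"

definition thetam :: "(nat \<Rightarrow> nat) \<Rightarrow> (nat \<Rightarrow> nat) \<Rightarrow> nat \<Rightarrow> nat \<Rightarrow> KK tmat" where
  "thetam kk ll n N = mprod (Bas n N) (map (Sm kk ll) (rev [1..<n]))"

definition T0m :: "(nat \<Rightarrow> nat) \<Rightarrow> (nat \<Rightarrow> nat) \<Rightarrow> nat \<Rightarrow> nat \<Rightarrow> KK tmat" where
  "T0m kk ll n N = mprod (Bas n N)
     (map (Tinvm kk ll) [1..<n] @ [thetam kk ll n N, S0m kk ll])"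

text \<open>Image of the generators g_0, ..., g_{n-1} of the cyclotomic Hecke algebra under Phi\<close>
definition HeckeGens :: "(nat \<Rightarrow> nat) \<Rightarrow> (nat \<Rightarrow> nat) \<Rightarrow> nat \<Rightarrow> nat \<Rightarrow> KK tmat set" where
  "HeckeGens kk ll n N = {T0m kk ll n N} \<union> {Tm kk ll a | a. 1 \<le> a \<and> a \<le> n - 1}"

text \<open>Operators on V as matrices: f r c = coefficient of u_r in f(u_c).\<close>
type_synonym 'k vmat = "nat \<Rightarrow> nat \<Rightarrow> 'k"

text \<open>Tensor product of a list of homogeneous operators (operator, parity) with the
 Koszul sign: (phi_1 \<otimes> ... \<otimes> phi_n)(x_1 \<otimes> ... \<otimes> x_n) =
 (-1)^{\<Sum>_{s<t} |x_s| |phi_t|} phi_1(x_1) \<otimes> ... \<otimes> phi_n(x_n).\<close>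
definition tens :: "(nat \<Rightarrow> nat) \<Rightarrow> ('k::field vmat \<times> nat) list \<Rightarrow> 'k tmat" where
  "tens p fs = (\<lambda>r c. (-1) ^ (\<Sum>t<length fs. snd (fs ! t) * (\<Sum>s<t. p (c ! s)))
                        * (\<Prod>t<length fs. fst (fs ! t) (r ! t) (c ! t)))"

definition kd :: "nat \<Rightarrow> nat \<Rightarrow> int" where "kd a b = (if a = b then 1 else 0)"

definition idv :: "'k::field vmat" where "idv = (\<lambda>r c. if r = c then 1 else 0)"

definition Ev :: "(nat \<Rightarrow> nat) \<Rightarrow> nat \<Rightarrow> KK vmat" where
  "Ev p a = (\<lambda>r c. if r = a \<and> c = a + 1 then (-1) ^ p (a + 1) else 0)"

definition Fv :: "(nat \<Rightarrow> nat) \<Rightarrow> nat \<Rightarrow> KK vmat" where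
  "Fv p a = (\<lambda>r c. if r = a + 1 \<and> c = a then (-1) ^ p a else 0)"

definition Kv :: "(nat \<Rightarrow> nat) \<Rightarrow> nat \<Rightarrow> int \<Rightarrow> KK vmat" where
  "Kv p b e = (\<lambda>r c. if r = c then qK powi (e * (-1) ^ p c * kd b c) else 0)"

definition Ktv :: "(nat \<Rightarrow> nat) \<Rightarrow> nat \<Rightarrow> int \<Rightarrow> KK vmat" where
  "Ktv p a e = (\<lambda>r c. if r = c then qK powi (e * (-1) ^ p c * (kd a c - kd (a + 1) c)) else 0)"

definition Epar :: "(nat \<Rightarrow> nat) \<Rightarrow> nat \<Rightarrow> nat" where
  "Epar p a = (p a + p (a + 1)) mod 2"

definition msum :: "nat \<Rightarrow> (nat \<Rightarrow> 'k::field tmat) \<Rightarrow> 'k tmat" where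
  "msum n f = (\<lambda>r c. \<Sum>j<n. f j r c)"

definition PsiE :: "(nat \<Rightarrow> nat) \<Rightarrow> nat \<Rightarrow> nat \<Rightarrow> KK tmat" where
  "PsiE p n a = msum n (\<lambda>j. tens p (replicate j (Ktv p a 1, 0) @ [(Ev p a, Epar p a)]
                                  @ replicate (n - 1 - j) (idv, 0)))"

definition PsiF :: "(nat \<Rightarrow> nat) \<Rightarrow> nat \<Rightarrow> nat \<Rightarrow> KK tmat" where
  "PsiF p n a = msum n (\<lambda>j. tens p (replicate j (idv, 0) @ [(Fv p a, Epar p a)]
                                  @ replicate (n - 1 - j) (Ktv p a (-1), 0)))"

definition PsiK :: "(nat \<Rightarrow> nat) \<Rightarrow> nat \<Rightarrow> nat \<Rightarrow> int \<Rightarrow> KK tmat" where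
  "PsiK p n b e = tens p (replicate n (Kv p b e, 0))"

text \<open>Image under Psi^{\<otimes>n} of the generators K_b^{\<pm>1}, E_a, F_a of U_q(g)\<close>
definition UGens :: "(nat \<Rightarrow> nat) \<Rightarrow> (nat \<Rightarrow> nat) \<Rightarrow> nat \<Rightarrow> nat \<Rightarrow> KK tmat set" where
  "UGens kk ll m n = (let p = par kk ll; N = dd kk ll m in
     {PsiK p n b e | b e. 1 \<le> b \<and> b \<le> N \<and> (e = 1 \<or> e = -1)}
     \<union> {PsiE p n a | a. 1 \<le> a \<and> a \<le> N - 1 \<and> a \<notin> dd kk ll ` {1..m - 1}}
     \<union> {PsiF p n a | a. 1 \<le> a \<and> a \<le> N - 1 \<and> a \<notin> dd kk ll ` {1..m - 1}})"

end

theory Submission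
  imports Defs
begin

definition alT :: "'k::field \<Rightarrow> (nat\<Rightarrow>nat) \<Rightarrow> nat \<Rightarrow> nat \<Rightarrow> 'k" where
 "alT q p x y = (if x < y then q - inverse q else if x = y then ((q - inverse q) + (-1)^p x * (q + inverse q))/2 else 0)"
definition beT :: "(nat\<Rightarrow>nat) \<Rightarrow> nat \<Rightarrow> nat \<Rightarrow> 'k::field" where
 "beT p x y = (if x \<noteq> y then (-1)^(p x * p y) else 0)"

definition wK :: "'k::field \<Rightarrow> (nat\<Rightarrow>nat) \<Rightarrow> nat \<Rightarrow> int \<Rightarrow> nat \<Rightarrow> 'k" where
 "wK q p a e x = q powi (e * (-1) ^ p x * (kd a x - kd (a + 1) x))"

definition LI :: "(nat\<Rightarrow>nat\<Rightarrow>'k::field) \<Rightarrow> (nat\<Rightarrow>nat\<Rightarrow>'k) \<Rightarrow> nat \<Rightarrow> nat \<Rightarrow> nat \<Rightarrow> (nat\<Rightarrow>nat) \<Rightarrow> (nat\<Rightarrow>'k) \<Rightarrow> (nat\<Rightarrow>'k) \<Rightarrow> bool" where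
"LI al be src tgt ep p wl wr = (\<forall>x y u v.
  (if x = src then wr y * (al tgt y * (if u = tgt \<and> v = y then 1 else 0) + be tgt y * (if u = y \<and> v = tgt then 1 else 0)) else 0)
 + (if y = src then (-1)^(ep * p x) * wl x * (al x tgt * (if u = x \<and> v = tgt then 1 else 0) + be x tgt * (if u = tgt \<and> v = x then 1 else 0)) else 0)
 = al x y * ((if x = src then wr y * (if u = tgt \<and> v = y then 1 else 0) else 0) + (if y = src then (-1)^(ep * p x) * wl x * (if u = x \<and> v = tgt then 1 else 0) else 0))
 + be x y * ((if y = src then wr x * (if u = tgt \<and> v = x then 1 else 0) else 0) + (if x = src then (-1)^(ep * p y) * wl y * (if u = y \<and> v = tgt then 1 else 0) else 0)))"

lemma par01: "(p::nat\<Rightarrow>nat) z \<le> 1 \<Longrightarrow> p z = 0 \<or> p z = 1" by auto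

lemma LI_TE:
  fixes q :: "'k::field_char_0"
  assumes q: "q \<noteq> 0" and p: "\<And>z. p z \<le> 1"
  shows "LI (alT q p) (beT p) (a+1) a ((p a + p (a+1)) mod 2) p (wK q p a 1) (\<lambda>_. 1)"
  unfolding LI_def
  apply (intro allI)
  subgoal for x y u v
  using par01[of p a, OF p] par01[of p "a+1", OF p] par01[of p x, OF p] par01[of p y, OF p] q
  apply (cases "x = a+1"; cases "y = a+1"; cases "x = a"; cases "y = a")
  apply (auto simp: alT_def beT_def wK_def kd_def field_simps)
  done
  done

lemma LI_TF:
  fixes q :: "'k::field_char_0"
  assumes q: "q \<noteq> 0" and p: "\<And>z. p z \<le> 1"
  shows "LI (alT q p) (beT p) a (a+1) ((p a + p (a+1)) mod 2) p (\<lambda>_. 1) (wK q p a (-1))"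
  unfolding LI_def
  apply (intro allI)
  subgoal for x y u v
  using par01[of p a, OF p] par01[of p "a+1", OF p] par01[of p x, OF p] par01[of p y, OF p] q
  apply (cases "x = a+1"; cases "y = a+1"; cases "x = a"; cases "y = a")
  apply (auto simp: alT_def beT_def wK_def kd_def field_simps)
  done
  done

definition alS :: "(nat \<Rightarrow> nat) \<Rightarrow> 'k::field \<Rightarrow> (nat\<Rightarrow>nat) \<Rightarrow> nat \<Rightarrow> nat \<Rightarrow> 'k" where
 "alS cl q p x y = (if cl x = cl y then alT q p x y else if x = y then (-1)^p x else 0)"
definition beS :: "(nat \<Rightarrow> nat) \<Rightarrow> (nat\<Rightarrow>nat) \<Rightarrow> nat \<Rightarrow> nat \<Rightarrow> 'k::field" where
 "beS cl p x y = (if cl x = cl y then beT p x y else if x = y then 0 else (-1)^(p x * p y))"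

lemma LI_SE:
  fixes q :: "'k::field_char_0"
  assumes q: "q \<noteq> 0" and p: "\<And>z. p z \<le> 1" and cl: "cl a = cl (a+1)"
  shows "LI (alS cl q p) (beS cl p) (a+1) a ((p a + p (a+1)) mod 2) p (wK q p a 1) (\<lambda>_. 1)"
  unfolding LI_def
  apply (intro allI)
  subgoal for x y u v
  using par01[of p a, OF p] par01[of p "a+1", OF p] par01[of p x, OF p] par01[of p y, OF p] q cl
  apply (cases "x = a+1"; cases "y = a+1"; cases "x = a"; cases "y = a"; cases "cl x = cl a"; cases "cl y = cl a")
  apply (auto simp: alS_def beS_def alT_def beT_def wK_def kd_def field_simps)
  done
  done

lemma LI_SF:
  fixes q :: "'k::field_char_0"
  assumes q: "q \<noteq> 0" and p: "\<And>z. p z \<le> 1" and cl: "cl a = cl (a+1)"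
  shows "LI (alS cl q p) (beS cl p) a (a+1) ((p a + p (a+1)) mod 2) p (\<lambda>_. 1) (wK q p a (-1))"
  unfolding LI_def
  apply (intro allI)
  subgoal for x y u v
  using par01[of p a, OF p] par01[of p "a+1", OF p] par01[of p x, OF p] par01[of p y, OF p] q cl
  apply (cases "x = a+1"; cases "y = a+1"; cases "x = a"; cases "y = a"; cases "cl x = cl a"; cases "cl y = cl a")
  apply (auto simp: alS_def beS_def alT_def beT_def wK_def kd_def field_simps)
  done
  done

definition commB :: "nat list set \<Rightarrow> 'k::field tmat \<Rightarrow> 'k tmat \<Rightarrow> bool" where
  "commB B X Y = (\<forall>r\<in>B. \<forall>c\<in>B. mmul B X Y r c = mmul B Y X r c)"

lemma commB_sym: "commB B X Y = commB B Y X"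
  unfolding commB_def by auto

lemma mmul_assoc: "finite B \<Longrightarrow> mmul B (mmul B X Y) Z r c = mmul B X (mmul B Y Z) r c"
proof -
  have "mmul B (mmul B X Y) Z r c = (\<Sum>s\<in>B. \<Sum>t\<in>B. X r t * Y t s * Z s c)"
    unfolding mmul_def by (simp add: sum_distrib_right)
  also have "\<dots> = (\<Sum>t\<in>B. \<Sum>s\<in>B. X r t * Y t s * Z s c)" by (rule sum.swap)
  also have "\<dots> = mmul B X (mmul B Y Z) r c"
    unfolding mmul_def by (simp add: sum_distrib_left mult.assoc)
  finally show ?thesis .
qed

lemma mmul_cong_right: "(\<And>s. s \<in> B \<Longrightarrow> Y s c = Y' s c) \<Longrightarrow> mmul B X Y r c = mmul B X Y' r c"
  unfolding mmul_def by (rule sum.cong) auto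
lemma mmul_cong_left: "(\<And>s. s \<in> B \<Longrightarrow> X r s = X' r s) \<Longrightarrow> mmul B X Y r c = mmul B X' Y r c"
  unfolding mmul_def by (rule sum.cong) auto

lemma mmul_idm_left: "finite B \<Longrightarrow> r \<in> B \<Longrightarrow> mmul B idm Y r c = Y r c"
proof -
  assume "finite B" "r \<in> B"
  have "\<And>s. idm r s * Y s c = (if r = s then Y r c else 0)" unfolding idm_def by simp
  thus ?thesis unfolding mmul_def using \<open>finite B\<close> \<open>r \<in> B\<close> by simp
qed
lemma mmul_idm_right: "finite B \<Longrightarrow> c \<in> B \<Longrightarrow> mmul B Y idm r c = Y r c"
proof -
  assume "finite B" "c \<in> B"
  have "\<And>s. Y r s * idm s c = (if c = s then Y r c else 0)" unfolding idm_def by auto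
  thus ?thesis unfolding mmul_def using \<open>finite B\<close> \<open>c \<in> B\<close> by simp
qed

lemma comm_idm: "finite B \<Longrightarrow> commB B idm Y"
  unfolding commB_def by (simp add: mmul_idm_left mmul_idm_right)

lemma comm_add: "commB B M Y \<Longrightarrow> commB B M' Y \<Longrightarrow> commB B (\<lambda>r c. M r c + M' r c) Y"
  unfolding commB_def mmul_def by (simp add: distrib_left distrib_right sum.distrib)

lemma comm_smult: "commB B M Y \<Longrightarrow> commB B (\<lambda>r c. x * M r c) Y"
  unfolding commB_def
proof (intro ballI)
  fix r c assume h: "\<forall>r\<in>B. \<forall>c\<in>B. mmul B M Y r c = mmul B Y M r c" and rc: "r \<in> B" "c \<in> B"
  have "mmul B (\<lambda>r c. x * M r c) Y r c = x * mmul B M Y r c"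
    unfolding mmul_def by (simp add: sum_distrib_left mult.assoc)
  moreover have "mmul B Y (\<lambda>r c. x * M r c) r c = x * mmul B Y M r c"
    unfolding mmul_def by (simp add: sum_distrib_left algebra_simps)
  ultimately show "mmul B (\<lambda>r c. x * M r c) Y r c = mmul B Y (\<lambda>r c. x * M r c) r c" using h rc by simp
qed

lemma comm_lin: "commB B M Y \<Longrightarrow> commB B M' Y \<Longrightarrow> commB B (\<lambda>r c. M r c - k * M' r c) Y"
proof -
  assume a: "commB B M Y" "commB B M' Y"
  have "commB B (\<lambda>r c. M r c + (\<lambda>r c. (-k) * M' r c) r c) Y"
    by (rule comm_add[OF a(1) comm_smult[OF a(2)]])
  thus ?thesis by simp
qed

lemma comm_mult:
  assumes fin: "finite B" and h1: "commB B M Y" and h2: "commB B M' Y"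
  shows "commB B (mmul B M M') Y"
  unfolding commB_def
proof (intro ballI)
  fix r c assume r: "r \<in> B" and c: "c \<in> B"
  have "mmul B (mmul B M M') Y r c = mmul B M (mmul B M' Y) r c" by (rule mmul_assoc[OF fin])
  also have "\<dots> = mmul B M (mmul B Y M') r c"
    by (rule mmul_cong_right) (use h2 c in \<open>auto simp: commB_def\<close>)
  also have "\<dots> = mmul B (mmul B M Y) M' r c" by (rule mmul_assoc[OF fin, symmetric])
  also have "\<dots> = mmul B (mmul B Y M) M' r c"
    by (rule mmul_cong_left) (use h1 r in \<open>auto simp: commB_def\<close>)
  also have "\<dots> = mmul B Y (mmul B M M') r c" by (rule mmul_assoc[OF fin])
  finally show "mmul B (mmul B M M') Y r c = mmul B Y (mmul B M M') r c" .
qed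

lemma galg_comm:
  assumes fin: "finite B" and G: "\<And>g. g \<in> G \<Longrightarrow> commB B g Y" and X: "X \<in> galg B G"
  shows "commB B X Y"
  using X
proof (induction rule: galg.induct)
  case galg_id thus ?case by (rule comm_idm[OF fin])
next
  case (galg_gen M) thus ?case by (rule G)
next
  case (galg_add M M') thus ?case using comm_add by blast
next
  case (galg_smult M x) thus ?case using comm_smult by blast
next
  case (galg_mult M M') thus ?case using comm_mult[OF fin] by blast
qed

lemma mprod_comm:
  assumes fin: "finite B" shows "(\<And>M. M \<in> set Ms \<Longrightarrow> commB B M Y) \<Longrightarrow> commB B (mprod B Ms) Y"
  unfolding mprod_def
proof (induction Ms)
  case Nil thus ?case by (simp add: comm_idm[OF fin])
next
  case (Cons M Ms) thus ?case by (simp add: comm_mult[OF fin])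
qed

lemma finite_Bas: "finite (Bas n N)"
proof -
  have "Bas n N = {xs. set xs \<subseteq> {1..N} \<and> length xs = n}" unfolding Bas_def by auto
  thus ?thesis using finite_lists_length_eq[of "{1..N}" n] by simp
qed

lemma swp_eq: "swp (Suc P) c = c[P := c ! Suc P, Suc P := c ! P]"
  unfolding swp_def by simp

lemma Bas_upd: "c \<in> Bas n N \<Longrightarrow> t \<in> {1..N} \<Longrightarrow> c[j := t] \<in> Bas n N"
  unfolding Bas_def using set_update_subset_insert by fastforce

lemma Bas_swp: assumes "c \<in> Bas n N" "Suc P < n" shows "swp (Suc P) c \<in> Bas n N"
proof -
  have l: "length c = n" "set c \<subseteq> {1..N}" using assms by (auto simp: Bas_def)
  have i: "c ! Suc P \<in> set c" "c ! P \<in> set c" using assms l by auto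
  have "set (c[P := c ! Suc P]) \<subseteq> set c" using set_update_subset_insert[of c P "c ! Suc P"] i by blast
  hence "set (c[P := c ! Suc P, Suc P := c ! P]) \<subseteq> set c"
    using set_update_subset_insert[of "c[P := c ! Suc P]" "Suc P" "c ! P"] i by blast
  hence "set (swp (Suc P) c) \<subseteq> set c" unfolding swp_eq .
  thus ?thesis using l unfolding Bas_def by (auto simp: swp_def)
qed

definition coefY :: "nat \<Rightarrow> 'k::field \<Rightarrow> (nat\<Rightarrow>nat) \<Rightarrow> (nat \<Rightarrow> 'k) \<Rightarrow> (nat \<Rightarrow> 'k) \<Rightarrow> nat \<Rightarrow> nat \<Rightarrow> nat list \<Rightarrow> 'k" where
 "coefY ep kap p wl wr n j c = (-1)^(ep * (\<Sum>s<j. p (c!s))) * kap * (\<Prod>t<j. wl (c!t)) * (\<Prod>t\<in>{Suc j..<n}. wr (c!t))"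

lemma nth_fs:
  assumes "t < n" "j < n"
  shows "(replicate j A @ Bt # replicate (n - Suc j) C) ! t = (if t < j then A else if t = j then Bt else C)"
  using assms by (auto simp: nth_append nth_Cons')

lemma prod_split_at:
  fixes g :: "nat \<Rightarrow> 'a::comm_monoid_mult"
  assumes "j < n"
  shows "(\<Prod>t<n. g t) = (\<Prod>t<j. g t) * g j * (\<Prod>t\<in>{Suc j..<n}. g t)"
proof -
  have "(\<Prod>t<n. g t) = (\<Prod>t\<in>{0..<j}. g t) * (\<Prod>t\<in>{j..<n}. g t)"
    using assms by (simp add: lessThan_atLeast0 prod.atLeastLessThan_concat)
  also have "(\<Prod>t\<in>{j..<n}. g t) = g j * (\<Prod>t\<in>{Suc j..<n}. g t)"
    using assms by (simp add: prod.atLeast_Suc_lessThan)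
  finally show ?thesis by (simp add: lessThan_atLeast0 mult.assoc)
qed

lemma tens_entry:
  fixes fa fb fc :: "'k::field vmat"
  assumes j: "j < n" and lr: "length r = n" and lc: "length c = n"
    and fa: "\<And>x y. fa x y = (if x = y then wl y else 0)"
    and fc: "\<And>x y. fc x y = (if x = y then wr y else 0)"
  shows "tens p (replicate j (fa, 0) @ [(fb, e)] @ replicate (n-1-j) (fc, 0)) r c =
    (if (\<forall>t<n. t \<noteq> j \<longrightarrow> r!t = c!t) then (-1)^(e * (\<Sum>s<j. p (c!s))) *
      ((\<Prod>t<j. wl (c!t)) * fb (r!j) (c!j) * (\<Prod>t\<in>{Suc j..<n}. wr (c!t))) else 0)"
proof -
  let ?fs = "replicate j (fa, 0) @ [(fb, e)] @ replicate (n-1-j) (fc, (0::nat))"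
  have len: "length ?fs = n" using j by simp
  have ex: "(\<Sum>t<n. snd (?fs ! t) * (\<Sum>s<t. p (c ! s))) = e * (\<Sum>s<j. p (c!s))"
  proof -
    have "(\<Sum>t<n. snd (?fs ! t) * (\<Sum>s<t. p (c ! s))) = (\<Sum>t<n. if t = j then e * (\<Sum>s<j. p (c!s)) else 0)"
      by (rule sum.cong) (auto simp: nth_fs[OF _ j])
    thus ?thesis using j by simp
  qed
  define g where "g t = fst (?fs ! t) (r ! t) (c ! t)" for t
  have pr: "(\<Prod>t<n. g t) = (\<Prod>t<j. g t) * g j * (\<Prod>t\<in>{Suc j..<n}. g t)"
    by (rule prod_split_at[OF j])
  have gj: "g j = fb (r!j) (c!j)" unfolding g_def using j by (simp add: nth_fs)
  have T: "tens p ?fs r c = (-1)^(e * (\<Sum>s<j. p (c!s))) * (\<Prod>t<n. g t)"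
    unfolding tens_def g_def by (simp only: len ex)
  show ?thesis
  proof (cases "\<forall>t<n. t \<noteq> j \<longrightarrow> r!t = c!t")
    case True
    have 1: "(\<Prod>t<j. g t) = (\<Prod>t<j. wl (c!t))"
      by (rule prod.cong) (use True j in \<open>auto simp: g_def nth_fs fa\<close>)
    have 2: "(\<Prod>t\<in>{Suc j..<n}. g t) = (\<Prod>t\<in>{Suc j..<n}. wr (c!t))"
      by (rule prod.cong) (use True j in \<open>auto simp: g_def nth_fs fc\<close>)
    have P: "(\<Prod>t<n. g t) = (\<Prod>t<j. wl (c!t)) * fb (r!j) (c!j) * (\<Prod>t\<in>{Suc j..<n}. wr (c!t))"
      using pr 1 2 gj by simp
    show ?thesis using T P True by simp
  next
    case False
    then obtain t where t: "t < n" "t \<noteq> j" "r!t \<noteq> c!t" by blast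
    have "g t = 0" using t j by (auto simp: g_def nth_fs fa fc)
    hence Z: "(\<Prod>t<n. g t) = 0" using t by (meson finite_lessThan lessThan_iff prod_zero_iff)
    show ?thesis by (simp only: T Z mult_zero_right if_not_P[OF False])
  qed
qed

lemma upd_iff:
  assumes "length r = n" "length c = n" "j < n"
  shows "((\<forall>t<n. t \<noteq> j \<longrightarrow> r!t = c!t) \<and> r!j = v) = (r = c[j := v])"
  using assms by (auto simp: list_eq_iff_nth_eq nth_list_update)

definition Yform :: "nat list set \<Rightarrow> nat \<Rightarrow> nat \<Rightarrow> nat \<Rightarrow> nat \<Rightarrow> 'k::field \<Rightarrow> (nat\<Rightarrow>nat) \<Rightarrow> (nat \<Rightarrow> 'k) \<Rightarrow> (nat \<Rightarrow> 'k) \<Rightarrow> 'k tmat \<Rightarrow> bool" where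
 "Yform B n src tgt ep kap p wl wr Y = (\<forall>r\<in>B. \<forall>c\<in>B.
     Y r c = (\<Sum>j<n. if c!j = src \<and> r = c[j := tgt] then coefY ep kap p wl wr n j c else 0))"

lemma PsiE_form:
  "Yform (Bas n N) n (a+1) a (Epar p a) ((-1)^p (a+1)) p (wK qK p a 1) (\<lambda>_. 1) (PsiE p n a)"
  unfolding Yform_def
proof (intro ballI)
  fix r c assume r: "r \<in> Bas n N" and c: "c \<in> Bas n N"
  have lr: "length r = n" and lc: "length c = n" using r c by (auto simp: Bas_def)
  show "PsiE p n a r c = (\<Sum>j<n. if c!j = a+1 \<and> r = c[j := a] then coefY (Epar p a) ((-1)^p (a+1)) p (wK qK p a 1) (\<lambda>_. 1) n j c else 0)"
    unfolding PsiE_def msum_def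
  proof (rule sum.cong[OF refl])
    fix j assume "j \<in> {..<n}" hence j: "j < n" by simp
    have "tens p (replicate j (Ktv p a 1, 0) @ [(Ev p a, Epar p a)] @ replicate (n - 1 - j) (idv, 0)) r c
      = (if (\<forall>t<n. t \<noteq> j \<longrightarrow> r!t = c!t) then (-1)^(Epar p a * (\<Sum>s<j. p (c!s))) *
      ((\<Prod>t<j. wK qK p a 1 (c!t)) * Ev p a (r!j) (c!j) * (\<Prod>t\<in>{Suc j..<n}. 1)) else 0)"
      by (rule tens_entry[OF j lr lc]) (auto simp: Ktv_def wK_def idv_def)
    also have "\<dots> = (if c!j = a+1 \<and> r = c[j := a] then coefY (Epar p a) ((-1)^p (a+1)) p (wK qK p a 1) (\<lambda>_. 1) n j c else 0)"
      using upd_iff[OF lr lc j, of a, symmetric] by (auto simp: Ev_def coefY_def algebra_simps)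
    finally show "tens p (replicate j (Ktv p a 1, 0) @ [(Ev p a, Epar p a)] @ replicate (n - 1 - j) (idv, 0)) r c = \<dots>" .
  qed
qed

lemma PsiF_form:
  "Yform (Bas n N) n a (a+1) (Epar p a) ((-1)^p a) p (\<lambda>_. 1) (wK qK p a (-1)) (PsiF p n a)"
  unfolding Yform_def
proof (intro ballI)
  fix r c assume r: "r \<in> Bas n N" and c: "c \<in> Bas n N"
  have lr: "length r = n" and lc: "length c = n" using r c by (auto simp: Bas_def)
  show "PsiF p n a r c = (\<Sum>j<n. if c!j = a \<and> r = c[j := a+1] then coefY (Epar p a) ((-1)^p a) p (\<lambda>_. 1) (wK qK p a (-1)) n j c else 0)"
    unfolding PsiF_def msum_def
  proof (rule sum.cong[OF refl])
    fix j assume "j \<in> {..<n}" hence j: "j < n" by simp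
    have "tens p (replicate j (idv, 0) @ [(Fv p a, Epar p a)] @ replicate (n - 1 - j) (Ktv p a (-1), 0)) r c
      = (if (\<forall>t<n. t \<noteq> j \<longrightarrow> r!t = c!t) then (-1)^(Epar p a * (\<Sum>s<j. p (c!s))) *
      ((\<Prod>t<j. 1) * Fv p a (r!j) (c!j) * (\<Prod>t\<in>{Suc j..<n}. wK qK p a (-1) (c!t))) else 0)"
      by (rule tens_entry[OF j lr lc]) (auto simp: Ktv_def wK_def idv_def)
    also have "\<dots> = (if c!j = a \<and> r = c[j := a+1] then coefY (Epar p a) ((-1)^p a) p (\<lambda>_. 1) (wK qK p a (-1)) n j c else 0)"
      using upd_iff[OF lr lc j, of "a+1", symmetric] by (auto simp: Fv_def coefY_def algebra_simps)
    finally show "tens p (replicate j (idv, 0) @ [(Fv p a, Epar p a)] @ replicate (n - 1 - j) (Ktv p a (-1), 0)) r c = \<dots>" .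
  qed
qed

lemma PsiK_form:
  assumes r: "r \<in> Bas n N" and c: "c \<in> Bas n N"
  shows "PsiK p n b e r c = (if r = c then (\<Prod>t<n. qK powi (e * (-1) ^ p (c!t) * kd b (c!t))) else 0)"
proof -
  have lr: "length r = n" and lc: "length c = n" using r c by (auto simp: Bas_def)
  have "PsiK p n b e r c = (\<Prod>t<n. Kv p b e (r!t) (c!t))"
    unfolding PsiK_def tens_def by simp
  also have "\<dots> = (if r = c then (\<Prod>t<n. qK powi (e * (-1) ^ p (c!t) * kd b (c!t))) else 0)"
  proof (cases "r = c")
    case True thus ?thesis by (simp add: Kv_def)
  next
    case False
    then obtain t where t: "t < n" "r!t \<noteq> c!t" using lr lc by (auto simp: list_eq_iff_nth_eq)
    hence "Kv p b e (r!t) (c!t) = 0" by (simp add: Kv_def)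
    hence "(\<Prod>t<n. Kv p b e (r!t) (c!t)) = 0" using t by (meson finite_lessThan lessThan_iff prod_zero_iff)
    thus ?thesis using False by simp
  qed
  finally show ?thesis .
qed

definition LIL :: "(nat\<Rightarrow>nat\<Rightarrow>'k::field) \<Rightarrow> (nat\<Rightarrow>nat\<Rightarrow>'k) \<Rightarrow> nat \<Rightarrow> nat \<Rightarrow> nat \<Rightarrow> (nat\<Rightarrow>nat) \<Rightarrow> (nat\<Rightarrow>'k) \<Rightarrow> (nat\<Rightarrow>'k) \<Rightarrow> nat \<Rightarrow> nat \<Rightarrow> nat \<Rightarrow> nat \<Rightarrow> 'k" where
"LIL al be src tgt ep p wl wr x y u v =
  (if x = src then wr y * (al tgt y * (if u = tgt \<and> v = y then 1 else 0) + be tgt y * (if u = y \<and> v = tgt then 1 else 0)) else 0)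
 + (if y = src then (-1)^(ep * p x) * wl x * (al x tgt * (if u = x \<and> v = tgt then 1 else 0) + be x tgt * (if u = tgt \<and> v = x then 1 else 0)) else 0)"
definition LIR :: "(nat\<Rightarrow>nat\<Rightarrow>'k::field) \<Rightarrow> (nat\<Rightarrow>nat\<Rightarrow>'k) \<Rightarrow> nat \<Rightarrow> nat \<Rightarrow> nat \<Rightarrow> (nat\<Rightarrow>nat) \<Rightarrow> (nat\<Rightarrow>'k) \<Rightarrow> (nat\<Rightarrow>'k) \<Rightarrow> nat \<Rightarrow> nat \<Rightarrow> nat \<Rightarrow> nat \<Rightarrow> 'k" where
"LIR al be src tgt ep p wl wr x y u v =
   al x y * ((if x = src then wr y * (if u = tgt \<and> v = y then 1 else 0) else 0) + (if y = src then (-1)^(ep * p x) * wl x * (if u = x \<and> v = tgt then 1 else 0) else 0))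
 + be x y * ((if y = src then wr x * (if u = tgt \<and> v = x then 1 else 0) else 0) + (if x = src then (-1)^(ep * p y) * wl y * (if u = y \<and> v = tgt then 1 else 0) else 0))"

lemma LI_D: "LI al be src tgt ep p wl wr \<Longrightarrow> LIL al be src tgt ep p wl wr x y u v = LIR al be src tgt ep p wl wr x y u v"
  unfolding LI_def LIL_def LIR_def by blast

definition Xform :: "nat list set \<Rightarrow> nat \<Rightarrow> (nat\<Rightarrow>nat\<Rightarrow>'k::field) \<Rightarrow> (nat\<Rightarrow>nat\<Rightarrow>'k) \<Rightarrow> 'k tmat \<Rightarrow> bool" where
 "Xform B P al be X = (\<forall>r\<in>B. \<forall>c\<in>B. X r c = al (c!P) (c!Suc P) * (if r = c then 1 else 0)
     + be (c!P) (c!Suc P) * (if r = swp (Suc P) c then 1 else 0))"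

lemma swp_nth_other: "t \<noteq> P \<Longrightarrow> t \<noteq> Suc P \<Longrightarrow> swp (Suc P) c ! t = c ! t"
  by (simp add: swp_eq)
lemma swp_nth_P: "Suc P < length c \<Longrightarrow> swp (Suc P) c ! P = c ! Suc P"
  by (simp add: swp_eq nth_list_update)
lemma swp_nth_SucP: "Suc P < length c \<Longrightarrow> swp (Suc P) c ! Suc P = c ! P"
  by (simp add: swp_eq nth_list_update)

lemma sum_split2:
  fixes h :: "nat \<Rightarrow> 'a::comm_monoid_add"
  assumes "P \<in> S" "Suc P \<in> S" "finite S"
  shows "sum h S = h P + h (Suc P) + sum h (S - {P, Suc P})"
proof -
  have "sum h S = h P + sum h (S - {P})" using assms by (simp add: sum.remove)
  also have "sum h (S - {P}) = h (Suc P) + sum h (S - {P} - {Suc P})"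
    using assms by (subst sum.remove[of _ "Suc P"]) auto
  also have "S - {P} - {Suc P} = S - {P, Suc P}" by auto
  finally show ?thesis by (simp add: add.assoc)
qed

lemma prod_split2:
  fixes h :: "nat \<Rightarrow> 'a::comm_monoid_mult"
  assumes "P \<in> S" "Suc P \<in> S" "finite S"
  shows "prod h S = h P * h (Suc P) * prod h (S - {P, Suc P})"
proof -
  have "prod h S = h P * prod h (S - {P})" using assms by (simp add: prod.remove)
  also have "prod h (S - {P}) = h (Suc P) * prod h (S - {P} - {Suc P})"
    using assms by (subst prod.remove[of _ "Suc P"]) auto
  also have "S - {P} - {Suc P} = S - {P, Suc P}" by auto
  finally show ?thesis by (simp add: mult.assoc)
qed

lemma sum_swp:
  fixes g :: "nat \<Rightarrow> 'a::comm_monoid_add"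
  assumes "finite S" "P \<in> S \<longleftrightarrow> Suc P \<in> S" "Suc P < length c"
  shows "(\<Sum>t\<in>S. g (swp (Suc P) c ! t)) = (\<Sum>t\<in>S. g (c ! t))"
proof (cases "P \<in> S")
  case True
  show ?thesis
    apply (subst (1 2) sum_split2[of P S])
    using True assms apply (auto simp: swp_nth_P swp_nth_SucP swp_nth_other add_ac intro!: sum.cong)
    done
next
  case False thus ?thesis using assms by (intro sum.cong refl) (metis swp_nth_other)
qed

lemma prod_swp:
  fixes g :: "nat \<Rightarrow> 'a::comm_monoid_mult"
  assumes "finite S" "P \<in> S \<longleftrightarrow> Suc P \<in> S" "Suc P < length c"
  shows "(\<Prod>t\<in>S. g (swp (Suc P) c ! t)) = (\<Prod>t\<in>S. g (c ! t))"
proof (cases "P \<in> S")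
  case True
  show ?thesis
    apply (subst (1 2) prod_split2[of P S])
    using True assms apply (auto simp: swp_nth_P swp_nth_SucP swp_nth_other mult_ac intro!: prod.cong)
    done
next
  case False thus ?thesis using assms by (intro prod.cong refl) (metis swp_nth_other)
qed

lemma coefY_swp:
  assumes "j \<noteq> P" "j \<noteq> Suc P" "Suc P < n" "length c = n"
  shows "coefY ep kap p wl wr n j (swp (Suc P) c) = coefY ep kap p wl wr n j c"
proof -
  have a: "P \<in> {..<j} \<longleftrightarrow> Suc P \<in> {..<j}" "P \<in> {Suc j..<n} \<longleftrightarrow> Suc P \<in> {Suc j..<n}"
    using assms by auto
  show ?thesis unfolding coefY_def
    using sum_swp[of "{..<j}" P c p, OF _ a(1)] prod_swp[of "{..<j}" P c wl, OF _ a(1)]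
      prod_swp[of "{Suc j..<n}" P c wr, OF _ a(2)] assms by simp
qed

definition Zf :: "nat \<Rightarrow> 'k::field \<Rightarrow> (nat\<Rightarrow>nat) \<Rightarrow> (nat \<Rightarrow> 'k) \<Rightarrow> (nat \<Rightarrow> 'k) \<Rightarrow> nat \<Rightarrow> nat \<Rightarrow> nat list \<Rightarrow> 'k" where
 "Zf ep kap p wl wr n P c = (-1)^(ep * (\<Sum>s<P. p (c!s))) * kap * (\<Prod>t<P. wl (c!t)) * (\<Prod>t\<in>{Suc (Suc P)..<n}. wr (c!t))"

lemma coefY_P: "Suc P < n \<Longrightarrow> coefY ep kap p wl wr n P c = Zf ep kap p wl wr n P c * wr (c ! Suc P)"
  unfolding coefY_def Zf_def by (simp add: prod.atLeast_Suc_lessThan algebra_simps)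

lemma coefY_SucP: "coefY ep kap p wl wr n (Suc P) c = Zf ep kap p wl wr n P c * ((-1)^(ep * p (c!P)) * wl (c!P))"
  unfolding coefY_def Zf_def by (simp add: algebra_simps power_add)

lemma Zf_swp: "Suc P < length c \<Longrightarrow> Zf ep kap p wl wr n P (swp (Suc P) c) = Zf ep kap p wl wr n P c"
  unfolding Zf_def by (simp add: swp_nth_other)

lemma upd2_iff:
  assumes "length r = n" "length c = n" "Suc P < n"
  shows "(r = c[P := u', Suc P := v']) =
    ((\<forall>t<n. t \<noteq> P \<and> t \<noteq> Suc P \<longrightarrow> r!t = c!t) \<and> r!P = u' \<and> r!Suc P = v')"
proof
  assume "r = c[P := u', Suc P := v']" thus "(\<forall>t<n. t \<noteq> P \<and> t \<noteq> Suc P \<longrightarrow> r!t = c!t) \<and> r!P = u' \<and> r!Suc P = v'"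
    using assms by (simp add: nth_list_update)
next
  assume h: "(\<forall>t<n. t \<noteq> P \<and> t \<noteq> Suc P \<longrightarrow> r!t = c!t) \<and> r!P = u' \<and> r!Suc P = v'"
  show "r = c[P := u', Suc P := v']"
  proof (rule nth_equalityI)
    show "length r = length (c[P := u', Suc P := v'])" using assms by simp
  next
    fix t assume "t < length r"
    thus "r ! t = c[P := u', Suc P := v'] ! t" using h assms
      by (cases "t = P"; cases "t = Suc P") (auto simp: nth_list_update)
  qed
qed

lemma comm_LY:
  fixes X Y :: "'k::field tmat"
  assumes P: "Suc P < n"
    and X: "Xform (Bas n N) P al be X"
    and Y: "Yform (Bas n N) n src tgt ep kap p wl wr Y"
    and tgt: "tgt \<in> {1..N}"
    and LI: "LI al be src tgt ep p wl wr"
  shows "commB (Bas n N) X Y"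
  unfolding commB_def
proof (intro ballI)
  let ?B = "Bas n N"
  fix r c assume r: "r \<in> ?B" and c: "c \<in> ?B"
  have lr: "length r = n" and lc: "length c = n" using r c by (auto simp: Bas_def)
  have fin: "finite ?B" by (rule finite_Bas)
  define x where "x = c ! P"
  define y where "y = c ! Suc P"
  define sc where "sc = swp (Suc P) c"
  define cf where "cf j = coefY ep kap p wl wr n j c" for j
  define cs where "cs j = coefY ep kap p wl wr n j sc" for j
  have sc: "sc \<in> ?B" unfolding sc_def by (rule Bas_swp[OF c P])
  have dB: "c[j := tgt] \<in> ?B" for j by (rule Bas_upd[OF c tgt])
  note Xe = X[unfolded Xform_def, rule_format]
  note Ye = Y[unfolded Yform_def, rule_format]
  define F where "F j = (if c!j = src then cf j * X r (c[j := tgt]) else 0)" for j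
  define G where "G j = al x y * (if c!j = src \<and> r = c[j := tgt] then cf j else 0)
     + be x y * (if sc!j = src \<and> r = sc[j := tgt] then cs j else 0)" for j
  have L: "mmul ?B X Y r c = (\<Sum>j<n. F j)"
  proof -
    have "mmul ?B X Y r c = (\<Sum>s\<in>?B. \<Sum>j<n. X r s * (if c!j = src \<and> s = c[j := tgt] then cf j else 0))"
      unfolding mmul_def cf_def by (rule sum.cong[OF refl]) (simp add: Ye[OF _ c] sum_distrib_left)
    also have "\<dots> = (\<Sum>j<n. \<Sum>s\<in>?B. X r s * (if c!j = src \<and> s = c[j := tgt] then cf j else 0))"
      by (rule sum.swap)
    also have "\<dots> = (\<Sum>j<n. F j)"
    proof (rule sum.cong[OF refl])
      fix j
      have "(\<Sum>s\<in>?B. X r s * (if c!j = src \<and> s = c[j := tgt] then cf j else 0))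
          = (\<Sum>s\<in>?B. if s = c[j := tgt] then (if c!j = src then cf j * X r s else 0) else 0)"
        by (rule sum.cong[OF refl]) auto
      also have "\<dots> = F j" using fin dB[of j] unfolding F_def by (simp add: sum.delta')
      finally show "(\<Sum>s\<in>?B. X r s * (if c!j = src \<and> s = c[j := tgt] then cf j else 0)) = F j" .
    qed
    finally show ?thesis .
  qed
  have R: "mmul ?B Y X r c = (\<Sum>j<n. G j)"
  proof -
    have "mmul ?B Y X r c = (\<Sum>s\<in>?B. (if s = c then al x y * Y r s else 0) + (if s = sc then be x y * Y r s else 0))"
      unfolding mmul_def by (rule sum.cong[OF refl]) (simp add: Xe[OF _ c] x_def y_def sc_def algebra_simps)
    also have "\<dots> = al x y * Y r c + be x y * Y r sc"
      using fin c sc by (simp add: sum.distrib sum.delta')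
    also have "\<dots> = (\<Sum>j<n. G j)"
      unfolding G_def cf_def cs_def Ye[OF r c] Ye[OF r sc]
      by (simp add: sum.distrib sum_distrib_left if_distrib[of "\<lambda>z. _ * z"] cong: if_cong)
    finally show ?thesis .
  qed
  have Pn: "P \<in> {..<n}" "Suc P \<in> {..<n}" using P by auto
  have rest: "F j = G j" if j: "j \<in> {..<n} - {P, Suc P}" for j
  proof -
    have jP: "j \<noteq> P" "j \<noteq> Suc P" using j by auto
    have 1: "c[j := tgt] ! P = x" "c[j := tgt] ! Suc P = y" using jP by (auto simp: x_def y_def)
    have 2: "swp (Suc P) (c[j := tgt]) = sc[j := tgt]"
      unfolding sc_def swp_eq
    proof (intro nth_equalityI)
      fix i assume "i < length (c[j := tgt, P := c[j := tgt] ! Suc P, Suc P := c[j := tgt] ! P])"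
      thus "c[j := tgt, P := c[j := tgt] ! Suc P, Suc P := c[j := tgt] ! P] ! i = c[P := c ! Suc P, Suc P := c ! P, j := tgt] ! i"
        using jP by (cases "i = j"; cases "i = P"; cases "i = Suc P") (auto simp: nth_list_update)
    qed simp
    have 3: "sc ! j = c ! j" unfolding sc_def using jP by (simp add: swp_nth_other)
    have 4: "cs j = cf j" unfolding cs_def cf_def sc_def by (rule coefY_swp[OF jP P lc])
    show ?thesis unfolding F_def G_def
      using Xe[OF r dB[of j]] 1 2 3 4 by (auto simp: algebra_simps)
  qed
  have pair: "F P + F (Suc P) = G P + G (Suc P)"
  proof -
    define Ag where "Ag = (\<forall>t<n. t \<noteq> P \<and> t \<noteq> Suc P \<longrightarrow> r!t = c!t)"
    define u where "u = r ! P"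
    define v where "v = r ! Suc P"
    define Z where "Z = Zf ep kap p wl wr n P c"
    have ui: "(r = c[P := u', Suc P := v']) = (Ag \<and> u = u' \<and> v = v')" for u' v'
      unfolding Ag_def u_def v_def by (rule upd2_iff[OF lr lc P])
    have lP: "P < length c" "Suc P < length c" using P lc by auto
    have e1: "c[P := tgt] = c[P := tgt, Suc P := y]" using lP by (intro nth_equalityI) (auto simp: y_def nth_list_update)
    have e2: "c[Suc P := tgt] = c[P := x, Suc P := tgt]" using lP by (intro nth_equalityI) (auto simp: x_def nth_list_update)
    have e3: "sc = c[P := y, Suc P := x]" unfolding sc_def swp_eq x_def y_def ..
    have e4: "sc[P := tgt] = c[P := tgt, Suc P := x]" using lP unfolding e3 by (intro nth_equalityI) (auto simp: nth_list_update)
    have e5: "sc[Suc P := tgt] = c[P := y, Suc P := tgt]" using lP unfolding e3 by (intro nth_equalityI) (auto simp: nth_list_update)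
    have e6: "swp (Suc P) (c[P := tgt]) = c[P := y, Suc P := tgt]" using lP
      unfolding swp_eq by (intro nth_equalityI) (auto simp: y_def nth_list_update)
    have e7: "swp (Suc P) (c[Suc P := tgt]) = c[P := tgt, Suc P := x]" using lP
      unfolding swp_eq by (intro nth_equalityI) (auto simp: x_def nth_list_update)
    have i1: "(r = c[P := tgt]) = (Ag \<and> u = tgt \<and> v = y)" by (subst e1) (rule ui)
    have i2: "(r = c[Suc P := tgt]) = (Ag \<and> u = x \<and> v = tgt)" by (subst e2) (rule ui)
    have n1: "c[P := tgt] ! P = tgt" "c[P := tgt] ! Suc P = y" "c[Suc P := tgt] ! P = x" "c[Suc P := tgt] ! Suc P = tgt"
      using lP by (auto simp: x_def y_def nth_list_update)
    have sn: "sc ! P = y" "sc ! Suc P = x" unfolding sc_def x_def y_def using lP by (auto simp: swp_nth_P swp_nth_SucP)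
    have k1: "cf P = Z * wr y" unfolding cf_def Z_def y_def by (rule coefY_P[OF P])
    have k2: "cf (Suc P) = Z * ((-1)^(ep * p x) * wl x)" unfolding cf_def Z_def x_def by (rule coefY_SucP)
    have k3: "cs P = Z * wr x" unfolding cs_def Z_def using coefY_P[OF P, of ep kap p wl wr sc] Zf_swp[OF lP(2), of ep kap p wl wr n]
      by (simp add: sc_def swp_nth_SucP[OF lP(2)] x_def)
    have k4: "cs (Suc P) = Z * ((-1)^(ep * p y) * wl y)" unfolding cs_def Z_def using coefY_SucP[of ep kap p wl wr n P sc] Zf_swp[OF lP(2), of ep kap p wl wr n]
      by (simp add: sc_def swp_nth_P[OF lP(2)] y_def)
    have FP: "F P = (if x = src then Z * wr y * (al tgt y * (if Ag \<and> u = tgt \<and> v = y then 1 else 0)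
                 + be tgt y * (if Ag \<and> u = y \<and> v = tgt then 1 else 0)) else 0)"
      unfolding F_def Xe[OF r dB[of P]] n1 e6 using i1 ui k1 by (simp add: x_def)
    have FS: "F (Suc P) = (if y = src then Z * ((-1)^(ep * p x) * wl x) * (al x tgt * (if Ag \<and> u = x \<and> v = tgt then 1 else 0)
                 + be x tgt * (if Ag \<and> u = tgt \<and> v = x then 1 else 0)) else 0)"
      unfolding F_def Xe[OF r dB[of "Suc P"]] n1 e7 using i2 ui k2 by (simp add: y_def)
    have GP: "G P = al x y * (if x = src \<and> Ag \<and> u = tgt \<and> v = y then Z * wr y else 0)
        + be x y * (if y = src \<and> Ag \<and> u = tgt \<and> v = x then Z * wr x else 0)"
      unfolding G_def sn e4 using i1 ui k1 k3 by (simp add: x_def)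
    have GS: "G (Suc P) = al x y * (if y = src \<and> Ag \<and> u = x \<and> v = tgt then Z * ((-1)^(ep * p x) * wl x) else 0)
        + be x y * (if x = src \<and> Ag \<and> u = y \<and> v = tgt then Z * ((-1)^(ep * p y) * wl y) else 0)"
      unfolding G_def sn e5 using i2 ui k2 k4 by (simp add: y_def)
    show ?thesis
    proof (cases Ag)
      case False thus ?thesis unfolding FP FS GP GS by simp
    next
      case True
      have f1: "F P = Z * (if x = src then wr y * (al tgt y * (if u = tgt \<and> v = y then 1 else 0) + be tgt y * (if u = y \<and> v = tgt then 1 else 0)) else 0)"
        unfolding FP using True by (simp add: mult.assoc)
      have f2: "F (Suc P) = Z * (if y = src then (-1)^(ep * p x) * wl x * (al x tgt * (if u = x \<and> v = tgt then 1 else 0) + be x tgt * (if u = tgt \<and> v = x then 1 else 0)) else 0)"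
        unfolding FS using True by (simp add: mult.assoc)
      have "F P + F (Suc P) = Z * LIL al be src tgt ep p wl wr x y u v"
        unfolding f1 f2 LIL_def by (simp add: distrib_left)
      moreover
      have g1: "(if x = src \<and> Ag \<and> u = tgt \<and> v = y then Z * wr y else 0) = Z * (if x = src then wr y * (if u = tgt \<and> v = y then 1 else 0) else 0)"
        using True by simp
      have g2: "(if y = src \<and> Ag \<and> u = tgt \<and> v = x then Z * wr x else 0) = Z * (if y = src then wr x * (if u = tgt \<and> v = x then 1 else 0) else 0)"
        using True by simp
      have g3: "(if y = src \<and> Ag \<and> u = x \<and> v = tgt then Z * ((-1)^(ep * p x) * wl x) else 0) = Z * (if y = src then (-1)^(ep * p x) * wl x * (if u = x \<and> v = tgt then 1 else 0) else 0)"
        using True by simp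
      have g4: "(if x = src \<and> Ag \<and> u = y \<and> v = tgt then Z * ((-1)^(ep * p y) * wl y) else 0) = Z * (if x = src then (-1)^(ep * p y) * wl y * (if u = y \<and> v = tgt then 1 else 0) else 0)"
        using True by simp
      have ring: "\<And>al be Z a1 a2 b1 b2 :: 'k. al * (Z * a1) + be * (Z * b1) + (al * (Z * a2) + be * (Z * b2)) = Z * (al * (a1 + a2) + be * (b1 + b2))"
        by (simp add: algebra_simps)
      have "G P + G (Suc P) = Z * LIR al be src tgt ep p wl wr x y u v"
        unfolding GP GS LIR_def g1 g2 g3 g4 by (rule ring)
      ultimately show ?thesis using LI_D[OF LI] by simp
    qed
  qed
  have "(\<Sum>j<n. F j) = (\<Sum>j<n. G j)"
    apply (subst (1 2) sum_split2[OF Pn])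
     apply simp_all
    using pair rest by simp
  thus "mmul ?B X Y r c = mmul ?B Y X r c" using L R by simp
qed

instance fract :: ("{idom, ring_char_0}") field_char_0
proof
  show "inj (of_nat :: nat \<Rightarrow> 'a fract)"
  proof (rule injI)
    fix m n :: nat assume "(of_nat m :: 'a fract) = of_nat n"
    hence "Fract (of_nat m :: 'a) 1 = Fract (of_nat n) 1" by (simp add: of_nat_fract)
    hence "(of_nat m :: 'a) = of_nat n" by (simp add: eq_fract)
    thus "m = n" by simp
  qed
qed

lemma qK_nz: "qK \<noteq> 0"
proof -
  let ?x = "Poly_Mapping.single (Poly_Mapping.single (0::nat) (1::nat)) (1::complex)"
  have s: "?x \<noteq> 0"
  proof
    assume h: "?x = 0"
    have "Poly_Mapping.lookup ?x (Poly_Mapping.single 0 1) = 1" by simp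
    hence "Poly_Mapping.lookup (0::cpoly) (Poly_Mapping.single 0 1) = 1" unfolding h .
    thus False by simp
  qed
  have "Fract ?x 1 \<noteq> Fract 0 1" using s by (simp add: eq_fract)
  moreover have "Fract (0::cpoly) 1 = 0" by (rule fract_collapse(1))
  ultimately show ?thesis unfolding qK_def var_def by simp
qed

lemma par_le1: "par kk ll z \<le> 1"
  unfolding par_def Let_def by simp

lemma dd_mono: "c \<le> c' \<Longrightarrow> dd kk ll c \<le> dd kk ll c'"
  unfolding dd_def by (rule sum_mono2) auto

lemma col_eq:
  assumes a1: "1 \<le> a" and aN: "a + 1 \<le> dd kk ll m" and nb: "a \<notin> dd kk ll ` {1..m - 1}"
  shows "col kk ll a = col kk ll (a + 1)"
proof -
  let ?c0 = "col kk ll (a+1)"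
  have c0: "a + 1 \<le> dd kk ll ?c0" unfolding col_def by (rule LeastI[of _ m]) (rule aN)
  have c0m: "?c0 \<le> m" unfolding col_def by (rule Least_le) (rule aN)
  show ?thesis unfolding col_def[of kk ll a]
  proof (rule Least_equality)
    show "a \<le> dd kk ll ?c0" using c0 by simp
  next
    fix c assume h: "a \<le> dd kk ll c"
    show "?c0 \<le> c"
    proof (rule ccontr)
      assume "\<not> ?c0 \<le> c" hence lt: "c < ?c0" by simp
      hence "\<not> (a + 1 \<le> dd kk ll c)" unfolding col_def by (rule not_less_Least)
      hence eq: "dd kk ll c = a" using h by simp
      have "c \<noteq> 0"
      proof
        assume "c = 0" thus False using eq a1 by (simp add: dd_def)
      qed
      hence "c \<in> {1..m-1}" using lt c0m by auto
      thus False using nb eq by force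
    qed
  qed
qed

lemma Tm_form:
  "Xform (Bas n N) P (alT qK (par kk ll)) (beT (par kk ll)) (Tm kk ll (Suc P))"
  unfolding Xform_def Tm_def from_img_def Tact_def unitv_def alT_def beT_def
  by (auto simp: Let_def)

lemma Sm_form:
  "Xform (Bas n N) P (alS (col kk ll) qK (par kk ll)) (beS (col kk ll) (par kk ll)) (Sm kk ll (Suc P))"
  unfolding Xform_def Sm_def from_img_def Tact_def sact_def unitv_def alS_def beS_def alT_def beT_def
  by (auto simp: Let_def)

lemma comm_diag_L:
  fixes X Y :: "'k::field tmat"
  assumes P: "Suc P < n" and X: "Xform (Bas n N) P al be X"
    and Y: "\<And>r c. r \<in> Bas n N \<Longrightarrow> c \<in> Bas n N \<Longrightarrow> Y r c = (if r = c then d c else 0)"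
    and d: "\<And>c. c \<in> Bas n N \<Longrightarrow> d (swp (Suc P) c) = d c"
  shows "commB (Bas n N) X Y"
  unfolding commB_def
proof (intro ballI)
  let ?B = "Bas n N"
  fix r c assume r: "r \<in> ?B" and c: "c \<in> ?B"
  have fin: "finite ?B" by (rule finite_Bas)
  have "mmul ?B X Y r c = (\<Sum>s\<in>?B. if s = c then X r c * d c else 0)"
    unfolding mmul_def by (rule sum.cong) (auto simp: Y[OF _ c])
  also have "\<dots> = X r c * d c" using fin c by simp
  finally have 1: "mmul ?B X Y r c = X r c * d c" .
  have "mmul ?B Y X r c = (\<Sum>s\<in>?B. if s = r then d r * X r c else 0)"
    unfolding mmul_def by (rule sum.cong) (auto simp: Y[OF r])
  also have "\<dots> = d r * X r c" using fin r by simp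
  finally have 2: "mmul ?B Y X r c = d r * X r c" .
  have "X r c * d c = d r * X r c"
  proof (cases "r = c \<or> r = swp (Suc P) c")
    case True thus ?thesis using d[OF c] by (auto simp: mult.commute)
  next
    case False
    hence "X r c = 0" using X[unfolded Xform_def, rule_format, OF r c] by auto
    thus ?thesis by simp
  qed
  thus "mmul ?B X Y r c = mmul ?B Y X r c" using 1 2 by simp
qed

lemma comm_diag_diag:
  fixes X Y :: "'k::field tmat"
  assumes X: "\<And>r c. r \<in> Bas n N \<Longrightarrow> c \<in> Bas n N \<Longrightarrow> X r c = (if r = c then d0 c else 0)"
    and Y: "\<And>r c. r \<in> Bas n N \<Longrightarrow> c \<in> Bas n N \<Longrightarrow> Y r c = (if r = c then d c else 0)"
  shows "commB (Bas n N) X Y"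
  unfolding commB_def
proof (intro ballI)
  let ?B = "Bas n N"
  fix r c assume r: "r \<in> ?B" and c: "c \<in> ?B"
  have fin: "finite ?B" by (rule finite_Bas)
  have "mmul ?B X Y r c = (\<Sum>s\<in>?B. if s = c then X r c * d c else 0)"
    unfolding mmul_def by (rule sum.cong) (auto simp: Y[OF _ c])
  also have "\<dots> = X r c * d c" using fin c by simp
  finally have 1: "mmul ?B X Y r c = X r c * d c" .
  have "mmul ?B Y X r c = (\<Sum>s\<in>?B. if s = c then Y r c * d0 c else 0)"
    unfolding mmul_def by (rule sum.cong) (auto simp: X[OF _ c])
  also have "\<dots> = Y r c * d0 c" using fin c by simp
  finally have 2: "mmul ?B Y X r c = Y r c * d0 c" .
  show "mmul ?B X Y r c = mmul ?B Y X r c" unfolding 1 2 X[OF r c] Y[OF r c] by simp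
qed

lemma comm_diagX_Y:
  fixes X Y :: "'k::field tmat"
  assumes X: "\<And>r c. r \<in> Bas n N \<Longrightarrow> c \<in> Bas n N \<Longrightarrow> X r c = (if r = c then d0 c else 0)"
    and Y: "Yform (Bas n N) n src tgt ep kap p wl wr Y"
    and d0: "\<And>c j. c \<in> Bas n N \<Longrightarrow> j < n \<Longrightarrow> c ! j = src \<Longrightarrow> d0 (c[j := tgt]) = d0 c"
  shows "commB (Bas n N) X Y"
  unfolding commB_def
proof (intro ballI)
  let ?B = "Bas n N"
  fix r c assume r: "r \<in> ?B" and c: "c \<in> ?B"
  have fin: "finite ?B" by (rule finite_Bas)
  have "mmul ?B X Y r c = (\<Sum>s\<in>?B. if s = r then d0 r * Y r c else 0)"
    unfolding mmul_def by (rule sum.cong) (auto simp: X[OF r])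
  also have "\<dots> = d0 r * Y r c" using fin r by simp
  finally have 1: "mmul ?B X Y r c = d0 r * Y r c" .
  have "mmul ?B Y X r c = (\<Sum>s\<in>?B. if s = c then Y r c * d0 c else 0)"
    unfolding mmul_def by (rule sum.cong) (auto simp: X[OF _ c])
  also have "\<dots> = Y r c * d0 c" using fin c by simp
  finally have 2: "mmul ?B Y X r c = Y r c * d0 c" .
  have "d0 r * Y r c = Y r c * d0 c"
    unfolding Y[unfolded Yform_def, rule_format, OF r c] sum_distrib_left sum_distrib_right
  proof (rule sum.cong[OF refl])
    fix j assume "j \<in> {..<n}"
    thus "d0 r * (if c ! j = src \<and> r = c[j := tgt] then coefY ep kap p wl wr n j c else 0) =
          (if c ! j = src \<and> r = c[j := tgt] then coefY ep kap p wl wr n j c else 0) * d0 c"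
      using d0[OF c] by (auto simp: mult.commute)
  qed
  thus "mmul ?B X Y r c = mmul ?B Y X r c" using 1 2 by simp
qed

lemma S0m_diag: "S0m kk ll r c = (if r = c then QK (col kk ll (c!0)) else 0)"
  unfolding S0m_def from_img_def unitv_def by simp

definition good :: "(nat\<Rightarrow>nat) \<Rightarrow> (nat\<Rightarrow>nat) \<Rightarrow> nat \<Rightarrow> nat \<Rightarrow> KK tmat \<Rightarrow> bool" where
 "good kk ll n N u = ((\<forall>P. Suc P < n \<longrightarrow> commB (Bas n N) (Tm kk ll (Suc P)) u \<and> commB (Bas n N) (Sm kk ll (Suc P)) u)
     \<and> commB (Bas n N) (S0m kk ll) u)"

lemma good_Hecke:
  assumes g: "good kk ll n N u" and h: "X \<in> HeckeGens kk ll n N"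
  shows "commB (Bas n N) X u"
proof -
  have fin: "finite (Bas n N)" by (rule finite_Bas)
  have T: "commB (Bas n N) (Tm kk ll a) u" if ha: "1 \<le> a" "a < n" for a
  proof -
    obtain P where "a = Suc P" using ha by (cases a) auto
    thus ?thesis using g ha unfolding good_def by auto
  qed
  have S: "commB (Bas n N) (Sm kk ll a) u" if ha: "1 \<le> a" "a < n" for a
  proof -
    obtain P where "a = Suc P" using ha by (cases a) auto
    thus ?thesis using g ha unfolding good_def by auto
  qed
  have S0: "commB (Bas n N) (S0m kk ll) u" using g unfolding good_def by auto
  have Ti: "commB (Bas n N) (Tinvm kk ll a) u" if "1 \<le> a" "a < n" for a
    unfolding Tinvm_def by (rule comm_lin[OF T[OF that] comm_idm[OF fin]])
  have th: "commB (Bas n N) (thetam kk ll n N) u"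
    unfolding thetam_def by (rule mprod_comm[OF fin]) (auto intro: S)
  have T0: "commB (Bas n N) (T0m kk ll n N) u"
    unfolding T0m_def by (rule mprod_comm[OF fin]) (auto intro: Ti th S0)
  show ?thesis using h T T0 unfolding HeckeGens_def by auto
qed

lemma good_K:
  "good kk ll n N (PsiK (par kk ll) n b e)"
proof -
  define d where "d c = (\<Prod>t<n. qK powi (e * (-1) ^ par kk ll (c!t) * kd b (c!t)))" for c
  have Y: "\<And>r c. r \<in> Bas n N \<Longrightarrow> c \<in> Bas n N \<Longrightarrow> PsiK (par kk ll) n b e r c = (if r = c then d c else 0)"
    unfolding d_def by (rule PsiK_form)
  have dsw: "d (swp (Suc P) c) = d c" if "Suc P < n" "c \<in> Bas n N" for P c
  proof -
    have "length c = n" using that by (simp add: Bas_def)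
    thus ?thesis unfolding d_def using that
      by (intro prod_swp) auto
  qed
  have 1: "commB (Bas n N) (Tm kk ll (Suc P)) (PsiK (par kk ll) n b e)" if "Suc P < n" for P
    by (rule comm_diag_L[OF that Tm_form Y dsw[OF that]])
  have 2: "commB (Bas n N) (Sm kk ll (Suc P)) (PsiK (par kk ll) n b e)" if "Suc P < n" for P
    by (rule comm_diag_L[OF that Sm_form Y dsw[OF that]])
  have 3: "commB (Bas n N) (S0m kk ll) (PsiK (par kk ll) n b e)"
    by (rule comm_diag_diag[OF _ Y]) (rule S0m_diag)
  show ?thesis unfolding good_def using 1 2 3 by blast
qed

lemma good_E:
  assumes a1: "1 \<le> a" and aN: "a \<le> dd kk ll m - 1" and nb: "a \<notin> dd kk ll ` {1..m - 1}"
  shows "good kk ll n (dd kk ll m) (PsiE (par kk ll) n a)"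
proof -
  let ?N = "dd kk ll m"
  have cl: "col kk ll a = col kk ll (a + 1)" using col_eq[OF a1 _ nb] aN a1 by simp
  have tgt: "a \<in> {1..?N}" using a1 aN by auto
  note Y = PsiE_form[where n=n and N="?N" and p="par kk ll" and a=a, unfolded Epar_def]
  have LT: "LI (alT qK (par kk ll)) (beT (par kk ll)) (a+1) a ((par kk ll a + par kk ll (a+1)) mod 2) (par kk ll) (wK qK (par kk ll) a 1) (\<lambda>_. 1)"
    by (rule LI_TE[OF qK_nz par_le1])
  have LS: "LI (alS (col kk ll) qK (par kk ll)) (beS (col kk ll) (par kk ll)) (a+1) a ((par kk ll a + par kk ll (a+1)) mod 2) (par kk ll) (wK qK (par kk ll) a 1) (\<lambda>_. 1)"
    by (rule LI_SE[OF qK_nz par_le1 cl])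
  have S0: "commB (Bas n ?N) (S0m kk ll) (PsiE (par kk ll) n a)"
  proof (rule comm_diagX_Y[OF _ Y])
    show "S0m kk ll r c = (if r = c then QK (col kk ll (c!0)) else 0)" for r c by (rule S0m_diag)
  next
    fix c j assume c: "c \<in> Bas n ?N" and j: "j < n" and cj: "c ! j = a + 1"
    have lc: "length c = n" using c by (simp add: Bas_def)
    show "QK (col kk ll (c[j := a] ! 0)) = QK (col kk ll (c ! 0))"
      using cj cl j lc by (cases j) auto
  qed
  show ?thesis unfolding good_def
    using comm_LY[OF _ Tm_form Y tgt LT] comm_LY[OF _ Sm_form Y tgt LS] S0 by auto
qed

lemma good_F:
  assumes a1: "1 \<le> a" and aN: "a \<le> dd kk ll m - 1" and nb: "a \<notin> dd kk ll ` {1..m - 1}"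
  shows "good kk ll n (dd kk ll m) (PsiF (par kk ll) n a)"
proof -
  let ?N = "dd kk ll m"
  have cl: "col kk ll a = col kk ll (a + 1)" using col_eq[OF a1 _ nb] aN a1 by simp
  have tgt: "a + 1 \<in> {1..?N}" using a1 aN by auto
  note Y = PsiF_form[where n=n and N="?N" and p="par kk ll" and a=a, unfolded Epar_def]
  have LT: "LI (alT qK (par kk ll)) (beT (par kk ll)) a (a+1) ((par kk ll a + par kk ll (a+1)) mod 2) (par kk ll) (\<lambda>_. 1) (wK qK (par kk ll) a (-1))"
    by (rule LI_TF[OF qK_nz par_le1])
  have LS: "LI (alS (col kk ll) qK (par kk ll)) (beS (col kk ll) (par kk ll)) a (a+1) ((par kk ll a + par kk ll (a+1)) mod 2) (par kk ll) (\<lambda>_. 1) (wK qK (par kk ll) a (-1))"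
    by (rule LI_SF[OF qK_nz par_le1 cl])
  have S0: "commB (Bas n ?N) (S0m kk ll) (PsiF (par kk ll) n a)"
  proof (rule comm_diagX_Y[OF _ Y])
    show "S0m kk ll r c = (if r = c then QK (col kk ll (c!0)) else 0)" for r c by (rule S0m_diag)
  next
    fix c j assume c: "c \<in> Bas n ?N" and j: "j < n" and cj: "c ! j = a"
    have lc: "length c = n" using c by (simp add: Bas_def)
    show "QK (col kk ll (c[j := a + 1] ! 0)) = QK (col kk ll (c ! 0))"
      using cj cl j lc by (cases j) auto
  qed
  show ?thesis unfolding good_def
    using comm_LY[OF _ Tm_form Y tgt LT] comm_LY[OF _ Sm_form Y tgt LS] S0 by auto
qed

lemma good_U:
  assumes "u \<in> UGens kk ll m n"
  shows "good kk ll n (dd kk ll m) u"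
  using assms unfolding UGens_def Let_def
  by (auto intro: good_K good_E good_F)

theorem mainTheorem4:
  fixes m n :: nat and kk ll :: "nat \<Rightarrow> nat"
  assumes "1 \<le> m" and "1 \<le> n" and "0 < dd kk ll m"
  shows "\<forall>X \<in> galg (Bas n (dd kk ll m)) (HeckeGens kk ll n (dd kk ll m)).
         \<forall>Y \<in> galg (Bas n (dd kk ll m)) (UGens kk ll m n).
         \<forall>r \<in> Bas n (dd kk ll m). \<forall>c \<in> Bas n (dd kk ll m).
           mmul (Bas n (dd kk ll m)) X Y r c = mmul (Bas n (dd kk ll m)) Y X r c"
proof (intro ballI)
  let ?N = "dd kk ll m"
  let ?B = "Bas n ?N"
  have fin: "finite ?B" by (rule finite_Bas)
  fix X Y r c
  assume X: "X \<in> galg ?B (HeckeGens kk ll n ?N)" and Y: "Y \<in> galg ?B (UGens kk ll m n)"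
     and r: "r \<in> ?B" and c: "c \<in> ?B"
  have gY: "commB ?B g Y" if g: "g \<in> HeckeGens kk ll n ?N" for g
  proof -
    have "commB ?B Y g"
    proof (rule galg_comm[OF fin _ Y])
      fix u assume "u \<in> UGens kk ll m n"
      hence "commB ?B g u" using good_Hecke[OF good_U g] by blast
      thus "commB ?B u g" by (simp add: commB_sym)
    qed
    thus ?thesis by (simp add: commB_sym)
  qed
  have "commB ?B X Y" by (rule galg_comm[OF fin gY X])
  thus "mmul ?B X Y r c = mmul ?B Y X r c" using r c unfolding commB_def by blast
qed

end
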